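(* Let $X_1,\dots,X_n\in\mathbb{R}^d$, and let $f^*=\nabla\psi_{f^*}$ for a differentiable $\psi_{f^*}:\mathbb{R}^d\to\mathbb{R}$ satisfying: (A1) $\psi_{f^*}(z)\ge\psi_{f^*}(x)+\langle\nabla\psi_{f^*}(x),z-x\rangle+\frac{\lambda}{2}\|x-z\|_2^2$ for all $x,z$ (some $\lambda>0$); (A2) $\psi_{f^*}(z)\le\psi_{f^*}(x)+\langle\nabla\psi_{f^*}(x),z-x\rangle+\frac{L}{2}\|x-z\|_2^2$ for all $x,z$ (some $L>0$); (A3) $\max_i\|f^*(X_i)\|_2\le B$ for some $B<\infty$. Let $\theta_i^*=f^*(X_i)$, $\nu_n^*=\frac1n\sum_{i=1}^n\delta_{\theta_i^*}$, $\mu_n=\frac1n\sum_{i=1}^n\delta_{X_i}$, and let $\widehat\nu=\sum_{j=1}^p\widehat\alpha_j\delta_{\widehat\theta_j}$ be any atomic probability measure on $\mathbb{R}^d$ ($\widehat\alpha_j>0$, $\sum_j\widehat\alpha_j=1$). Let $\widehat\Gamma\in\mathbb{R}_+^{n\times p}$ be an optimal coupling, i.e. a minimizer of $\sum_{i,j}\Gamma_{ij}\frac12\|X_i-\widehat\theta_j\|_2^2$ subject to $\sum_i\Gamma_{ij}=\widehat\alpha_j$ for all $j$ and $\sum_j\Gamma_{ij}=1/n$ for all $i$, and define $\widehat f(X_i)=n\sum_{j=1}^p\widehat\Gamma_{ij}\widehat\theta_j$. Then $$\frac1n\sum_{i=1}^n\|\widehat f(X_i)-f^*(X_i)\|_2^2\le\frac{L}{\lambda}\,\mathsf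 W_2^2(\nu_n^*,\widehat\nu).$$
   Context: For probability measures $\mu,\nu$ on $\mathbb{R}^d$ with finite second moments, $\mathsf W_2^2(\mu,\nu)=\inf_{\gamma}\int\int\|x-y\|_2^2\,d\gamma(x,y)$, the infimum over all couplings $\gamma$ of $\mu$ and $\nu$ (probability measures on $\mathbb{R}^d\times\mathbb{R}^d$ with marginals $\mu$ and $\nu$). *)

theory Defs
  imports "HOL-Probability.Probability"
begin

definition atomic_measure :: "nat \<Rightarrow> (nat \<Rightarrow> real) \<Rightarrow> (nat \<Rightarrow> 'a::euclidean_space) \<Rightarrow> 'a measure" where
  "atomic_measure p w a =
     measure_of UNIV (sets borel) (\<lambda>A. \<Sum>j<p. ennreal (w j) * indicator A (a j))"

definition W2sq :: "'a::euclidean_space measure \<Rightarrow> 'a measure \<Rightarrow> ennreal" where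
  "W2sq \<mu> \<nu> = Inf {(\<integral>\<^sup>+ z. ennreal ((norm (fst z - snd z))\<^sup>2) \<partial>\<gamma>) | \<gamma>.
      sets \<gamma> = sets (borel \<Otimes>\<^sub>M borel) \<and>
      distr \<gamma> borel fst = \<mu> \<and> distr \<gamma> borel snd = \<nu>}"

end

theory Submission
  imports Defs
begin


lemma young_ineq:
  fixes d e :: "'a::real_inner"
  assumes "lam > 0"
  shows "d \<bullet> e \<le> lam / 2 * (norm d)\<^sup>2 + 1 / (2 * lam) * (norm e)\<^sup>2"
proof -
  have "0 \<le> (norm (lam *\<^sub>R d - e))\<^sup>2" by simp
  also have "\<dots> = lam\<^sup>2 * (norm d)\<^sup>2 - 2 * lam * (d \<bullet> e) + (norm e)\<^sup>2"
    unfolding power2_norm_eq_inner by (simp add: inner_diff_left inner_diff_right inner_commute power2_eq_square algebra_simps)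
  finally have "2 * lam * (d \<bullet> e) \<le> lam\<^sup>2 * (norm d)\<^sup>2 + (norm e)\<^sup>2" by simp
  then have "(2 * lam) * (d \<bullet> e) \<le> (2 * lam) * (lam / 2 * (norm d)\<^sup>2 + 1 / (2 * lam) * (norm e)\<^sup>2)"
    using assms by (simp add: algebra_simps power2_eq_square)
  then show ?thesis using assms by (simp add: mult_le_cancel_left)
qed

definition conj_fun :: "('a::real_inner \<Rightarrow> real) \<Rightarrow> 'a \<Rightarrow> real" where
  "conj_fun \<psi> y = (SUP x. x \<bullet> y - \<psi> x)"

lemma conj_pt_upper:
  fixes \<psi> :: "'a::real_inner \<Rightarrow> real"
  assumes A1: "\<And>x z. \<psi> z \<ge> \<psi> x + f x \<bullet> (z - x) + lam / 2 * (norm (x - z))\<^sup>2"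
    and lam: "lam > 0"
  shows "x \<bullet> y - \<psi> x \<le> (a \<bullet> f a - \<psi> a) + a \<bullet> (y - f a) + 1 / (2 * lam) * (norm (y - f a))\<^sup>2"
proof -
  have 1: "\<psi> x \<ge> \<psi> a + f a \<bullet> (x - a) + lam / 2 * (norm (x - a))\<^sup>2"
    using A1[of a x] by (simp add: norm_minus_commute)
  have 2: "(x - a) \<bullet> (y - f a) \<le> lam / 2 * (norm (x - a))\<^sup>2 + 1 / (2 * lam) * (norm (y - f a))\<^sup>2"
    by (rule young_ineq[OF lam])
  show ?thesis using 1 2 by (simp add: inner_diff_left inner_diff_right inner_commute)
qed

lemma conj_bdd:
  fixes \<psi> :: "'a::real_inner \<Rightarrow> real"
  assumes A1: "\<And>x z. \<psi> z \<ge> \<psi> x + f x \<bullet> (z - x) + lam / 2 * (norm (x - z))\<^sup>2"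
    and lam: "lam > 0"
  shows "bdd_above (range (\<lambda>x. x \<bullet> y - \<psi> x))"
  using conj_pt_upper[OF A1 lam, of _ y 0] by (auto intro!: bdd_aboveI2)

lemma conj_upper:
  fixes \<psi> :: "'a::real_inner \<Rightarrow> real"
  assumes A1: "\<And>x z. \<psi> z \<ge> \<psi> x + f x \<bullet> (z - x) + lam / 2 * (norm (x - z))\<^sup>2"
    and lam: "lam > 0"
  shows "conj_fun \<psi> y \<le> (a \<bullet> f a - \<psi> a) + a \<bullet> (y - f a) + 1 / (2 * lam) * (norm (y - f a))\<^sup>2"
  unfolding conj_fun_def
proof (rule cSUP_least)
  fix x show "x \<bullet> y - \<psi> x \<le> (a \<bullet> f a - \<psi> a) + a \<bullet> (y - f a) + 1 / (2 * lam) * (norm (y - f a))\<^sup>2"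
    by (rule conj_pt_upper[OF A1 lam])
qed simp

lemma conj_lower:
  fixes \<psi> :: "'a::real_inner \<Rightarrow> real"
  assumes A1: "\<And>x z. \<psi> z \<ge> \<psi> x + f x \<bullet> (z - x) + lam / 2 * (norm (x - z))\<^sup>2"
    and lam: "lam > 0"
    and A2: "\<And>x z. \<psi> z \<le> \<psi> x + f x \<bullet> (z - x) + L / 2 * (norm (x - z))\<^sup>2"
    and L: "L > 0"
  shows "conj_fun \<psi> y \<ge> (a \<bullet> f a - \<psi> a) + a \<bullet> (y - f a) + 1 / (2 * L) * (norm (y - f a))\<^sup>2"
proof -
  define e where "e = y - f a"
  define x where "x = a + (1 / L) *\<^sub>R e"
  have h1: "x \<bullet> y - \<psi> x \<le> conj_fun \<psi> y"
    unfolding conj_fun_def by (rule cSUP_upper) (auto intro: conj_bdd[OF A1 lam])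
  have h2: "\<psi> x \<le> \<psi> a + f a \<bullet> (x - a) + L / 2 * (norm (a - x))\<^sup>2" by (rule A2)
  have h3: "norm (a - x) = (1 / L) * norm e" using L by (simp add: x_def)
  have h4: "x \<bullet> y - f a \<bullet> (x - a) = a \<bullet> y + (1 / L) * (e \<bullet> y - f a \<bullet> e)"
    by (simp add: x_def inner_add_left algebra_simps)
  have h5: "e \<bullet> y - f a \<bullet> e = (norm e)\<^sup>2"
    by (simp add: e_def power2_norm_eq_inner inner_diff_left inner_diff_right inner_commute)
  have h6: "L / 2 * (norm (a - x))\<^sup>2 = 1 / (2 * L) * (norm e)\<^sup>2"
    using L unfolding h3 by (simp add: power2_eq_square field_simps)
  have h7: "(1 / L) * (norm e)\<^sup>2 - 1 / (2 * L) * (norm e)\<^sup>2 = 1 / (2 * L) * (norm e)\<^sup>2"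
    using L by (simp add: field_simps)
  have h8: "a \<bullet> f a - \<psi> a + a \<bullet> (y - f a) = a \<bullet> y - \<psi> a" by (simp add: inner_diff_right)
  show ?thesis using h1 h2 h4 h5 h6 h7 h8 by (simp add: e_def)
qed

lemma conj_jensen:
  fixes \<psi> :: "'a::real_inner \<Rightarrow> real"
  assumes A1: "\<And>x z. \<psi> z \<ge> \<psi> x + f x \<bullet> (z - x) + lam / 2 * (norm (x - z))\<^sup>2"
    and lam: "lam > 0"
    and g: "\<And>j. j < p \<Longrightarrow> g j \<ge> 0" and gs: "(\<Sum>j<p. g j) = 1"
  shows "conj_fun \<psi> (\<Sum>j<p. g j *\<^sub>R t j) \<le> (\<Sum>j<p. g j * conj_fun \<psi> (t j))"
  unfolding conj_fun_def[of \<psi> "\<Sum>j<p. g j *\<^sub>R t j"]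
proof (rule cSUP_least)
  fix x
  have "x \<bullet> (\<Sum>j<p. g j *\<^sub>R t j) - \<psi> x = (\<Sum>j<p. g j * (x \<bullet> t j - \<psi> x))"
    using gs by (simp add: inner_sum_right right_diff_distrib sum_subtractf flip: sum_distrib_right)
  also have "\<dots> \<le> (\<Sum>j<p. g j * conj_fun \<psi> (t j))"
  proof (rule sum_mono)
    fix j assume "j \<in> {..<p}"
    then have "g j \<ge> 0" using g by auto
    moreover have "x \<bullet> t j - \<psi> x \<le> conj_fun \<psi> (t j)"
      unfolding conj_fun_def by (rule cSUP_upper) (auto intro: conj_bdd[OF A1 lam])
    ultimately show "g j * (x \<bullet> t j - \<psi> x) \<le> g j * conj_fun \<psi> (t j)"
      by (rule mult_left_mono[rotated])
  qed
  finally show "x \<bullet> (\<Sum>j<p. g j *\<^sub>R t j) - \<psi> x \<le> (\<Sum>j<p. g j * conj_fun \<psi> (t j))" .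
qed simp

lemma row_sum_lemma:
  fixes G :: "nat \<Rightarrow> nat \<Rightarrow> real"
  assumes "\<And>i. i < n \<Longrightarrow> (\<Sum>j<p. G i j) = r"
  shows "(\<Sum>i<n. \<Sum>j<p. G i j * h i) = r * (\<Sum>i<n. h i)"
  using assms by (simp add: sum_distrib_left flip: sum_distrib_right)

lemma col_sum_lemma:
  fixes G :: "nat \<Rightarrow> nat \<Rightarrow> real"
  assumes "\<And>j. j < p \<Longrightarrow> (\<Sum>i<n. G i j) = \<alpha> j"
  shows "(\<Sum>i<n. \<Sum>j<p. G i j * k j) = (\<Sum>j<p. \<alpha> j * k j)"
  using assms by (subst sum.swap) (simp flip: sum_distrib_right)

lemma cost_expand:
  fixes G :: "nat \<Rightarrow> nat \<Rightarrow> real" and X \<theta> :: "nat \<Rightarrow> 'a::real_inner"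
  assumes col: "\<And>j. j < p \<Longrightarrow> (\<Sum>i<n. G i j) = \<alpha> j"
    and row: "\<And>i. i < n \<Longrightarrow> (\<Sum>j<p. G i j) = r"
  shows "(\<Sum>i<n. \<Sum>j<p. G i j * (1/2 * (norm (X i - \<theta> j))\<^sup>2))
    = 1/2 * (r * (\<Sum>i<n. (norm (X i))\<^sup>2)) + 1/2 * (\<Sum>j<p. \<alpha> j * (norm (\<theta> j))\<^sup>2)
      - (\<Sum>i<n. \<Sum>j<p. G i j * (X i \<bullet> \<theta> j))"
proof -
  have pt: "G i j * (1/2 * (norm (X i - \<theta> j))\<^sup>2) = 1/2 * (G i j * (norm (X i))\<^sup>2)
     + 1/2 * (G i j * (norm (\<theta> j))\<^sup>2) - G i j * (X i \<bullet> \<theta> j)" for i j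
    unfolding power2_norm_eq_inner
    by (simp add: inner_diff_left inner_diff_right inner_commute algebra_simps)
  have r1: "(\<Sum>i<n. \<Sum>j<p. G i j * (norm (X i))\<^sup>2) = r * (\<Sum>i<n. (norm (X i))\<^sup>2)"
    by (rule row_sum_lemma) (rule row)
  have c1: "(\<Sum>i<n. \<Sum>j<p. G i j * (norm (\<theta> j))\<^sup>2) = (\<Sum>j<p. \<alpha> j * (norm (\<theta> j))\<^sup>2)"
    by (rule col_sum_lemma) (rule col)
  have "(\<Sum>i<n. \<Sum>j<p. G i j * (1/2 * (norm (X i - \<theta> j))\<^sup>2))
     = 1/2 * (\<Sum>i<n. \<Sum>j<p. G i j * (norm (X i))\<^sup>2) + 1/2 * (\<Sum>i<n. \<Sum>j<p. G i j * (norm (\<theta> j))\<^sup>2)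
       - (\<Sum>i<n. \<Sum>j<p. G i j * (X i \<bullet> \<theta> j))"
    unfolding pt sum_subtractf sum.distrib sum_distrib_left by simp
  then show ?thesis using r1 c1 by simp
qed

lemma main_alg:
  fixes X :: "nat \<Rightarrow> 'a::real_inner"
    and \<psi> :: "'a \<Rightarrow> real" and f :: "'a \<Rightarrow> 'a"
    and n p :: nat and lam L :: real
    and \<alpha> :: "nat \<Rightarrow> real" and \<theta> :: "nat \<Rightarrow> 'a"
    and \<Gamma> G :: "nat \<Rightarrow> nat \<Rightarrow> real"
  assumes n_pos: "n \<ge> 1"
    and lam_pos: "lam > 0"
    and A1: "\<And>x z. \<psi> z \<ge> \<psi> x + f x \<bullet> (z - x) + lam / 2 * (norm (x - z))\<^sup>2"
    and L_pos: "L > 0"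
    and A2: "\<And>x z. \<psi> z \<le> \<psi> x + f x \<bullet> (z - x) + L / 2 * (norm (x - z))\<^sup>2"
    and Gamma_nonneg: "\<And>i j. i < n \<Longrightarrow> j < p \<Longrightarrow> \<Gamma> i j \<ge> 0"
    and Gamma_col: "\<And>j. j < p \<Longrightarrow> (\<Sum>i<n. \<Gamma> i j) = \<alpha> j"
    and Gamma_row: "\<And>i. i < n \<Longrightarrow> (\<Sum>j<p. \<Gamma> i j) = 1 / real n"
    and Gamma_opt: "\<And>G. (\<forall>i<n. \<forall>j<p. G i j \<ge> 0) \<Longrightarrow>
          (\<forall>j<p. (\<Sum>i<n. G i j) = \<alpha> j) \<Longrightarrow>
          (\<forall>i<n. (\<Sum>j<p. G i j) = 1 / real n) \<Longrightarrow>
          (\<Sum>i<n. \<Sum>j<p. \<Gamma> i j * (1/2 * (norm (X i - \<theta> j))\<^sup>2))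
            \<le> (\<Sum>i<n. \<Sum>j<p. G i j * (1/2 * (norm (X i - \<theta> j))\<^sup>2))"
    and G_nonneg: "\<And>i j. i < n \<Longrightarrow> j < p \<Longrightarrow> G i j \<ge> 0"
    and G_col: "\<And>j. j < p \<Longrightarrow> (\<Sum>i<n. G i j) = \<alpha> j"
    and G_row: "\<And>i. i < n \<Longrightarrow> (\<Sum>j<p. G i j) = 1 / real n"
  shows "(1 / real n) * (\<Sum>i<n. (norm (real n *\<^sub>R (\<Sum>j<p. \<Gamma> i j *\<^sub>R \<theta> j) - f (X i)))\<^sup>2)
    \<le> (L / lam) * (\<Sum>i<n. \<Sum>j<p. G i j * (norm (f (X i) - \<theta> j))\<^sup>2)"
proof -
  define \<phi> where "\<phi> = conj_fun \<psi>"
  define c where "c i = X i \<bullet> f (X i) - \<psi> (X i)" for i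
  define fh where "fh i = real n *\<^sub>R (\<Sum>j<p. \<Gamma> i j *\<^sub>R \<theta> j)" for i
  define t where "t i = f (X i)" for i
  have nr: "real n > 0" using n_pos by simp
  have S: "1 / (2 * L) * (norm (fh i - t i))\<^sup>2 \<le> (\<Sum>j<p. (real n * \<Gamma> i j) * \<phi> (\<theta> j)) - c i - X i \<bullet> fh i + X i \<bullet> t i"
    if i: "i < n" for i
  proof -
    have 1: "1 / (2 * L) * (norm (fh i - t i))\<^sup>2 \<le> \<phi> (fh i) - c i - X i \<bullet> (fh i - t i)"
      using conj_lower[OF A1 lam_pos A2 L_pos, of "X i" "fh i"] unfolding \<phi>_def c_def t_def by simp
    have fh': "fh i = (\<Sum>j<p. (real n * \<Gamma> i j) *\<^sub>R \<theta> j)"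
      by (simp add: fh_def scaleR_sum_right)
    have 2: "\<phi> (fh i) \<le> (\<Sum>j<p. (real n * \<Gamma> i j) * \<phi> (\<theta> j))"
      unfolding fh' \<phi>_def
      by (rule conj_jensen[OF A1 lam_pos]) (use i Gamma_nonneg Gamma_row nr in \<open>auto simp flip: sum_distrib_left\<close>)
    show ?thesis using 1 2 by (simp add: inner_diff_right)
  qed
  have sumS: "1 / (2 * L) * ((1 / real n) * (\<Sum>i<n. (norm (fh i - t i))\<^sup>2))
     \<le> (\<Sum>i<n. \<Sum>j<p. \<Gamma> i j * \<phi> (\<theta> j)) - (1 / real n) * (\<Sum>i<n. c i)
       - (1 / real n) * (\<Sum>i<n. X i \<bullet> fh i) + (1 / real n) * (\<Sum>i<n. X i \<bullet> t i)"
  proof -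
    have "(\<Sum>i<n. 1 / (2 * L) * (norm (fh i - t i))\<^sup>2) \<le>
       (\<Sum>i<n. (\<Sum>j<p. (real n * \<Gamma> i j) * \<phi> (\<theta> j)) - c i - X i \<bullet> fh i + X i \<bullet> t i)"
      by (rule sum_mono) (use S in auto)
    then have "(1 / real n) * (\<Sum>i<n. 1 / (2 * L) * (norm (fh i - t i))\<^sup>2) \<le>
       (1 / real n) * (\<Sum>i<n. (\<Sum>j<p. (real n * \<Gamma> i j) * \<phi> (\<theta> j)) - c i - X i \<bullet> fh i + X i \<bullet> t i)"
      using nr by (simp add: divide_right_mono)
    also have "\<dots> = (\<Sum>i<n. \<Sum>j<p. \<Gamma> i j * \<phi> (\<theta> j)) - (1 / real n) * (\<Sum>i<n. c i)
       - (1 / real n) * (\<Sum>i<n. X i \<bullet> fh i) + (1 / real n) * (\<Sum>i<n. X i \<bullet> t i)"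
      using nr by (simp add: sum.distrib sum_subtractf sum_distrib_left algebra_simps)
    finally show ?thesis by (simp add: sum_distrib_left mult_ac)
  qed
  have e1: "(\<Sum>i<n. \<Sum>j<p. \<Gamma> i j * \<phi> (\<theta> j)) = (\<Sum>i<n. \<Sum>j<p. G i j * \<phi> (\<theta> j))"
    using col_sum_lemma[where G=\<Gamma> and n=n and p=p and \<alpha>=\<alpha>, OF Gamma_col] col_sum_lemma[where G=G and n=n and p=p and \<alpha>=\<alpha>, OF G_col] by simp
  have e2: "(1 / real n) * (\<Sum>i<n. c i) = (\<Sum>i<n. \<Sum>j<p. G i j * c i)"
    using row_sum_lemma[where G=G and n=n and p=p and r="1 / real n", OF G_row] by simp
  have e3: "(1 / real n) * (\<Sum>i<n. X i \<bullet> t i) = (\<Sum>i<n. \<Sum>j<p. G i j * (X i \<bullet> t i))"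
    using row_sum_lemma[where G=G and n=n and p=p and r="1 / real n", OF G_row] by simp
  have e4: "(1 / real n) * (\<Sum>i<n. X i \<bullet> fh i) = (\<Sum>i<n. \<Sum>j<p. \<Gamma> i j * (X i \<bullet> \<theta> j))"
    using nr by (simp add: fh_def inner_sum_right sum_distrib_left)
  have opt: "(\<Sum>i<n. \<Sum>j<p. G i j * (X i \<bullet> \<theta> j)) \<le> (\<Sum>i<n. \<Sum>j<p. \<Gamma> i j * (X i \<bullet> \<theta> j))"
    using Gamma_opt[of G] G_nonneg G_col G_row
      cost_expand[where G=\<Gamma> and n=n and p=p and \<alpha>=\<alpha> and r="1 / real n" and X=X and \<theta>=\<theta>, OF Gamma_col Gamma_row]
      cost_expand[where G=G and n=n and p=p and \<alpha>=\<alpha> and r="1 / real n" and X=X and \<theta>=\<theta>, OF G_col G_row]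
    by simp
  have fin: "(\<Sum>i<n. \<Sum>j<p. G i j * (\<phi> (\<theta> j) - c i - X i \<bullet> (\<theta> j - t i)))
      \<le> (\<Sum>i<n. \<Sum>j<p. G i j * (1 / (2 * lam) * (norm (\<theta> j - t i))\<^sup>2))"
  proof (intro sum_mono mult_left_mono)
    fix i j assume "i \<in> {..<n}" "j \<in> {..<p}"
    then show "G i j \<ge> 0" using G_nonneg by auto
    show "\<phi> (\<theta> j) - c i - X i \<bullet> (\<theta> j - t i) \<le> 1 / (2 * lam) * (norm (\<theta> j - t i))\<^sup>2"
      using conj_upper[OF A1 lam_pos, of "\<theta> j" "X i"] unfolding \<phi>_def c_def t_def by simp
  qed
  have split: "(\<Sum>i<n. \<Sum>j<p. G i j * (\<phi> (\<theta> j) - c i - X i \<bullet> (\<theta> j - t i)))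
     = (\<Sum>i<n. \<Sum>j<p. G i j * \<phi> (\<theta> j)) - (\<Sum>i<n. \<Sum>j<p. G i j * c i)
       - (\<Sum>i<n. \<Sum>j<p. G i j * (X i \<bullet> \<theta> j)) + (\<Sum>i<n. \<Sum>j<p. G i j * (X i \<bullet> t i))"
    by (simp add: inner_diff_right algebra_simps sum.distrib sum_subtractf)
  have rhs: "(\<Sum>i<n. \<Sum>j<p. G i j * (1 / (2 * lam) * (norm (\<theta> j - t i))\<^sup>2))
     = 1 / (2 * lam) * (\<Sum>i<n. \<Sum>j<p. G i j * (norm (f (X i) - \<theta> j))\<^sup>2)"
    by (simp add: sum_distrib_left t_def norm_minus_commute algebra_simps)
  have key: "1 / (2 * L) * ((1 / real n) * (\<Sum>i<n. (norm (fh i - t i))\<^sup>2))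
      \<le> 1 / (2 * lam) * (\<Sum>i<n. \<Sum>j<p. G i j * (norm (f (X i) - \<theta> j))\<^sup>2)"
    using sumS e1 e2 e3 e4 opt fin split rhs by linarith
  then have "(2 * L) * (1 / (2 * L) * ((1 / real n) * (\<Sum>i<n. (norm (fh i - t i))\<^sup>2)))
      \<le> (2 * L) * (1 / (2 * lam) * (\<Sum>i<n. \<Sum>j<p. G i j * (norm (f (X i) - \<theta> j))\<^sup>2))"
    using L_pos by (intro mult_left_mono) auto
  then show ?thesis using L_pos lam_pos by (simp add: fh_def t_def)
qed



lemma atomic_sets: "sets (atomic_measure k w a) = sets borel"
  unfolding atomic_measure_def
  by (metis sets.sigma_sets_eq sets_measure_of space_borel sets.space_closed)

lemma atomic_emeasure:
  assumes "A \<in> sets borel"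
  shows "emeasure (atomic_measure k w a) A = (\<Sum>j<k. ennreal (w j) * indicator A (a j))"
  unfolding atomic_measure_def
proof (rule emeasure_measure_of_sigma)
  show "sigma_algebra UNIV (sets borel)"
    using sets.sigma_algebra_axioms[of borel] by simp
  show "positive (sets borel) (\<lambda>A. \<Sum>j<k. ennreal (w j) * indicator A (a j))"
    by (simp add: positive_def)
  show "countably_additive (sets borel) (\<lambda>A. \<Sum>j<k. ennreal (w j) * indicator A (a j))"
  proof (rule countably_additiveI)
    fix A :: "nat \<Rightarrow> 'a set" assume "disjoint_family A"
    then show "(\<Sum>i. \<Sum>j<k. ennreal (w j) * indicator (A i) (a j)) = (\<Sum>j<k. ennreal (w j) * indicator (\<Union>i. A i) (a j))"
      by (subst suminf_sum) (auto simp: suminf_indicator)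
  qed
qed (rule assms)

definition bet :: "nat \<Rightarrow> (nat \<Rightarrow> real) \<Rightarrow> (nat \<Rightarrow> 'a) \<Rightarrow> 'a \<Rightarrow> real" where
  "bet k w a b = (\<Sum>l<k. if a l = b then w l else 0)"

definition wt :: "nat \<Rightarrow> (nat \<Rightarrow> real) \<Rightarrow> (nat \<Rightarrow> 'a) \<Rightarrow> nat \<Rightarrow> 'a \<Rightarrow> real" where
  "wt k w a j b = indicator {a j} b * (w j / bet k w a (a j))"

lemma bet_pos:
  assumes w: "\<And>j. j < k \<Longrightarrow> w j > 0" and j: "j < k"
  shows "bet k w a (a j) > 0"
proof -
  have "(if a j = a j then w j else 0) \<le> bet k w a (a j)"
    unfolding bet_def by (rule member_le_sum) (use w j in \<open>auto intro: less_imp_le\<close>)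
  then show ?thesis using w[OF j] by simp
qed

lemma wt_nonneg:
  assumes w: "\<And>j. j < k \<Longrightarrow> w j > 0" and j: "j < k"
  shows "wt k w a j b \<ge> 0"
  using bet_pos[where a=a and k=k and w=w and j=j, OF w j] w[OF j] unfolding wt_def by simp

lemma wt_sum:
  assumes w: "\<And>j. j < k \<Longrightarrow> w j > 0"
  shows "(\<Sum>j<k. wt k w a j b) = indicator (a ` {..<k}) b"
proof (cases "b \<in> a ` {..<k}")
  case True
  then obtain j0 where j0: "j0 < k" "b = a j0" by auto
  have "(\<Sum>j<k. wt k w a j b) = (\<Sum>j<k. (if a j = b then w j else 0) / bet k w a b)"
    by (rule sum.cong) (auto simp: wt_def)
  also have "\<dots> = bet k w a b / bet k w a b" by (simp add: bet_def flip: sum_divide_distrib)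
  also have "\<dots> = 1" using bet_pos[where a=a and k=k and w=w and j=j0, OF w j0(1)] j0 by simp
  finally show ?thesis using True by simp
next
  case False
  then show ?thesis by (auto simp: wt_def indicator_def intro!: sum.neutral)
qed

lemma atomic_emeasure_singleton:
  assumes w: "\<And>j. j < k \<Longrightarrow> w j > 0"
  shows "emeasure (atomic_measure k w a) {b} = ennreal (bet k w a b)"
proof -
  have "emeasure (atomic_measure k w a) {b} = (\<Sum>j<k. ennreal (if a j = b then w j else 0))"
    proof (subst atomic_emeasure)
    show "(\<Sum>j<k. ennreal (w j) * indicator {b} (a j)) = (\<Sum>j<k. ennreal (if a j = b then w j else 0))"
      by (rule sum.cong) (simp_all add: indicator_def)
  qed simp
  also have "\<dots> = ennreal (bet k w a b)"
    unfolding bet_def by (rule sum_ennreal) (use w in \<open>auto intro: less_imp_le\<close>)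
  finally show ?thesis .
qed

lemma atomic_emeasure_UNIV:
  assumes w: "\<And>j. j < k \<Longrightarrow> w j > 0"
  shows "emeasure (atomic_measure k w a) UNIV = ennreal (\<Sum>j<k. w j)"
  by (subst atomic_emeasure) (use w in \<open>auto intro!: sum_ennreal intro: less_imp_le\<close>)

lemma atomic_emeasure_compl:
  shows "emeasure (atomic_measure k w a) (UNIV - a ` {..<k}) = 0"
proof -
  have "finite (a ` {..<k})" by simp
  then have "closed (a ` {..<k})" by (rule finite_imp_closed)
  then have "UNIV - a ` {..<k} \<in> sets borel" by auto
  then show ?thesis by (subst atomic_emeasure) auto
qed

lemma coupling_matrix:
  fixes t \<theta> :: "nat \<Rightarrow> 'a::euclidean_space" and \<gamma> :: "('a \<times> 'a) measure"
  assumes w1: "\<And>i. i < n \<Longrightarrow> w1 i > 0" and w2: "\<And>j. j < p \<Longrightarrow> w2 j > 0"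
    and s1: "(\<Sum>i<n. w1 i) = 1"
    and sg: "sets \<gamma> = sets (borel \<Otimes>\<^sub>M borel)"
    and m1: "distr \<gamma> borel fst = atomic_measure n w1 t"
    and m2: "distr \<gamma> borel snd = atomic_measure p w2 \<theta>"
  shows "\<exists>G. (\<forall>i<n. \<forall>j<p. G i j \<ge> 0) \<and> (\<forall>j<p. (\<Sum>i<n. G i j) = w2 j)
    \<and> (\<forall>i<n. (\<Sum>j<p. G i j) = w1 i)
    \<and> ennreal (\<Sum>i<n. \<Sum>j<p. G i j * (norm (t i - \<theta> j))\<^sup>2)
        \<le> (\<integral>\<^sup>+ z. ennreal ((norm (fst z - snd z))\<^sup>2) \<partial>\<gamma>)"
proof -
  define u where "u i = wt n w1 t i" for i
  define v where "v j = wt p w2 \<theta> j" for j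
  define U where "U i j z = u i (fst z) * v j (snd z)" for i j z
  define G where "G i j = (\<integral>z. U i j z \<partial>\<gamma>)" for i j
  have sp: "space \<gamma> = UNIV" using sets_eq_imp_space_eq[OF sg] by (simp add: space_pair_measure)
  have meq: "\<And>N. measurable \<gamma> N = measurable (borel \<Otimes>\<^sub>M borel) N"
    by (rule measurable_cong_sets[OF sg refl])
  have mfst: "fst \<in> measurable \<gamma> borel" unfolding meq by (rule measurable_fst)
  have msnd: "snd \<in> measurable \<gamma> borel" unfolding meq by (rule measurable_snd)
  have em1: "emeasure \<gamma> (fst -` A) = emeasure (atomic_measure n w1 t) A" if "A \<in> sets borel" for A
    using emeasure_distr[OF mfst that] m1 sp by simp
  have em2: "emeasure \<gamma> (snd -` A) = emeasure (atomic_measure p w2 \<theta>) A" if "A \<in> sets borel" for A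
    using emeasure_distr[OF msnd that] m2 sp by simp
  have "emeasure \<gamma> (space \<gamma>) = ennreal 1"
    using em1[of UNIV] atomic_emeasure_UNIV[where k=n and w=w1 and a=t, OF w1] s1 sp by simp
  then interpret finite_measure \<gamma> by (intro finite_measureI) simp
  have clS: "closed (a ` {..<k})" for a :: "nat \<Rightarrow> 'a" and k by (rule finite_imp_closed) simp
  have AE1: "AE z in \<gamma>. fst z \<in> t ` {..<n}"
  proof (rule AE_I')
    show "fst -` (UNIV - t ` {..<n}) \<in> null_sets \<gamma>"
      using measurable_sets[OF mfst, of "UNIV - t ` {..<n}"] clS[of t n] em1[of "UNIV - t ` {..<n}"]
        atomic_emeasure_compl[of n w1 t] sp by (auto simp: null_sets_def)
  qed auto
  have AE2: "AE z in \<gamma>. snd z \<in> \<theta> ` {..<p}"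
  proof (rule AE_I')
    show "snd -` (UNIV - \<theta> ` {..<p}) \<in> null_sets \<gamma>"
      using measurable_sets[OF msnd, of "UNIV - \<theta> ` {..<p}"] clS[of \<theta> p] em2[of "UNIV - \<theta> ` {..<p}"]
        atomic_emeasure_compl[of p w2 \<theta>] sp by (auto simp: null_sets_def)
  qed auto
  have mu: "u i \<in> borel_measurable borel" for i unfolding u_def wt_def by measurable
  have mv: "v j \<in> borel_measurable borel" for j unfolding v_def wt_def by measurable
  have mu': "(\<lambda>z. u i (fst z)) \<in> borel_measurable \<gamma>" for i by (rule measurable_compose[OF mfst mu])
  have mv': "(\<lambda>z. v j (snd z)) \<in> borel_measurable \<gamma>" for j by (rule measurable_compose[OF msnd mv])
  have mU: "U i j \<in> borel_measurable \<gamma>" for i j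
    unfolding U_def by (intro borel_measurable_times mu' mv')
  have bu: "\<bar>u i b\<bar> \<le> \<bar>w1 i / bet n w1 t (t i)\<bar>" for i b
    by (simp add: u_def wt_def indicator_def abs_mult)
  have bv: "\<bar>v j b\<bar> \<le> \<bar>w2 j / bet p w2 \<theta> (\<theta> j)\<bar>" for j b
    by (simp add: v_def wt_def indicator_def abs_mult)
  have iU: "integrable \<gamma> (U i j)" for i j
  proof (rule integrable_const_bound[where B="\<bar>w1 i / bet n w1 t (t i)\<bar> * \<bar>w2 j / bet p w2 \<theta> (\<theta> j)\<bar>"])
    show "AE x in \<gamma>. norm (U i j x) \<le> \<bar>w1 i / bet n w1 t (t i)\<bar> * \<bar>w2 j / bet p w2 \<theta> (\<theta> j)\<bar>"
    proof (rule AE_I2)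
      fix x
      show "norm (U i j x) \<le> \<bar>w1 i / bet n w1 t (t i)\<bar> * \<bar>w2 j / bet p w2 \<theta> (\<theta> j)\<bar>"
        unfolding U_def real_norm_def abs_mult by (rule mult_mono[OF bu bv]) simp_all
    qed
  qed (rule mU)
  have int_atomic: "(\<integral>b. wt k w a j b \<partial>atomic_measure k w a) = w j"
    if w: "\<And>j. j < k \<Longrightarrow> w j > 0" and j: "j < k" for k w and a :: "nat \<Rightarrow> 'a" and j
  proof -
    have "(\<integral>b. wt k w a j b \<partial>atomic_measure k w a)
        = measure (atomic_measure k w a) {a j} * (w j / bet k w a (a j))"
      unfolding wt_def by (simp add: sets_eq_imp_space_eq[OF atomic_sets])
    also have "measure (atomic_measure k w a) {a j} = bet k w a (a j)"
      unfolding measure_def using atomic_emeasure_singleton[where k=k and w=w and a=a, OF w]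
        bet_pos[where k=k and w=w and a=a and j=j, OF w j] by simp
    finally show ?thesis using bet_pos[where k=k and w=w and a=a and j=j, OF w j] by simp
  qed
  have row: "(\<Sum>j<p. G i j) = w1 i" if i: "i < n" for i
  proof -
    have "(\<Sum>j<p. G i j) = (\<integral>z. (\<Sum>j<p. U i j z) \<partial>\<gamma>)"
      unfolding G_def by (rule Bochner_Integration.integral_sum[symmetric]) (rule iU)
    also have "\<dots> = (\<integral>z. u i (fst z) \<partial>\<gamma>)"
    proof (rule integral_cong_AE)
      show "(\<lambda>z. \<Sum>j<p. U i j z) \<in> borel_measurable \<gamma>" using mU by auto
      show "AE z in \<gamma>. (\<Sum>j<p. U i j z) = u i (fst z)"
        using AE2 by eventually_elim
          (simp add: U_def v_def wt_sum[OF w2] flip: sum_distrib_left)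
    qed (rule mu')
    also have "\<dots> = (\<integral>b. u i b \<partial>distr \<gamma> borel fst)"
      by (rule integral_distr[OF mfst mu, symmetric])
    also have "\<dots> = w1 i" unfolding m1 u_def by (rule int_atomic[OF w1 i])
    finally show ?thesis .
  qed
  have col: "(\<Sum>i<n. G i j) = w2 j" if j: "j < p" for j
  proof -
    have "(\<Sum>i<n. G i j) = (\<integral>z. (\<Sum>i<n. U i j z) \<partial>\<gamma>)"
      unfolding G_def by (rule Bochner_Integration.integral_sum[symmetric]) (rule iU)
    also have "\<dots> = (\<integral>z. v j (snd z) \<partial>\<gamma>)"
    proof (rule integral_cong_AE)
      show "(\<lambda>z. \<Sum>i<n. U i j z) \<in> borel_measurable \<gamma>" using mU by auto
      show "AE z in \<gamma>. (\<Sum>i<n. U i j z) = v j (snd z)"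
        using AE1 by eventually_elim
          (simp add: U_def u_def wt_sum[OF w1] flip: sum_distrib_right)
    qed (rule mv')
    also have "\<dots> = (\<integral>b. v j b \<partial>distr \<gamma> borel snd)"
      by (rule integral_distr[OF msnd mv, symmetric])
    also have "\<dots> = w2 j" unfolding m2 v_def by (rule int_atomic[OF w2 j])
    finally show ?thesis .
  qed
  have Gnn: "G i j \<ge> 0" if "i < n" "j < p" for i j
    unfolding G_def U_def u_def v_def
    by (rule integral_nonneg_AE, rule AE_I2, rule mult_nonneg_nonneg)
      (auto intro: wt_nonneg[where k=n and w=w1 and j=i, OF w1] wt_nonneg[where k=p and w=w2 and j=j, OF w2] that)
  define cst where "cst z = (norm (fst z - snd z))\<^sup>2" for z :: "'a \<times> 'a"
  define H where "H z = (\<Sum>i<n. \<Sum>j<p. U i j z * (norm (t i - \<theta> j))\<^sup>2)" for z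
  have pt: "U i j z * (norm (t i - \<theta> j))\<^sup>2 = U i j z * cst z" for i j z
    by (cases "fst z = t i"; cases "snd z = \<theta> j") (auto simp: U_def u_def v_def wt_def cst_def)
  have Hform: "H z = indicator (t ` {..<n}) (fst z) * indicator (\<theta> ` {..<p}) (snd z) * cst z" for z
  proof -
    have "H z = (\<Sum>i<n. \<Sum>j<p. u i (fst z) * v j (snd z) * cst z)"
      unfolding H_def by (simp only: pt) (simp add: U_def)
    also have "\<dots> = (\<Sum>i<n. u i (fst z)) * (\<Sum>j<p. v j (snd z)) * cst z"
      by (simp add: sum_distrib_left sum_distrib_right mult_ac) (rule sum.swap)
    finally show ?thesis by (simp add: u_def v_def wt_sum[OF w1] wt_sum[OF w2])
  qed
  have Hnn: "0 \<le> H z" for z unfolding Hform cst_def by simp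
  have Hle: "H z \<le> cst z" for z unfolding Hform cst_def by (simp add: indicator_def)
  have iH: "integrable \<gamma> H" unfolding H_def using iU by auto
  have "(\<Sum>i<n. \<Sum>j<p. G i j * (norm (t i - \<theta> j))\<^sup>2) = (\<integral>z. H z \<partial>\<gamma>)"
    unfolding H_def G_def
    by (simp add: Bochner_Integration.integral_sum iU)
  then have "ennreal (\<Sum>i<n. \<Sum>j<p. G i j * (norm (t i - \<theta> j))\<^sup>2) = (\<integral>\<^sup>+ z. ennreal (H z) \<partial>\<gamma>)"
    using nn_integral_eq_integral[OF iH] Hnn by simp
  also have "\<dots> \<le> (\<integral>\<^sup>+ z. ennreal (cst z) \<partial>\<gamma>)"
    by (rule nn_integral_mono) (rule ennreal_leI[OF Hle])
  finally show ?thesis using Gnn row col unfolding cst_def by blast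
qed


theorem theorem4:
  fixes X :: "nat \<Rightarrow> 'a::euclidean_space"
    and \<psi> :: "'a \<Rightarrow> real" and f :: "'a \<Rightarrow> 'a"
    and n p :: nat and lam L B :: real
    and \<alpha> :: "nat \<Rightarrow> real" and \<theta> :: "nat \<Rightarrow> 'a"
    and \<Gamma> :: "nat \<Rightarrow> nat \<Rightarrow> real"
  assumes n_pos: "n \<ge> 1"
    and grad: "\<And>x. (\<psi> has_derivative (\<lambda>h. f x \<bullet> h)) (at x)"
    and lam_pos: "lam > 0"
    and A1: "\<And>x z. \<psi> z \<ge> \<psi> x + f x \<bullet> (z - x) + lam / 2 * (norm (x - z))\<^sup>2"
    and L_pos: "L > 0"
    and A2: "\<And>x z. \<psi> z \<le> \<psi> x + f x \<bullet> (z - x) + L / 2 * (norm (x - z))\<^sup>2"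
    and A3: "\<And>i. i < n \<Longrightarrow> norm (f (X i)) \<le> B"
    and alpha_pos: "\<And>j. j < p \<Longrightarrow> \<alpha> j > 0"
    and alpha_sum: "(\<Sum>j<p. \<alpha> j) = 1"
    and Gamma_nonneg: "\<And>i j. i < n \<Longrightarrow> j < p \<Longrightarrow> \<Gamma> i j \<ge> 0"
    and Gamma_col: "\<And>j. j < p \<Longrightarrow> (\<Sum>i<n. \<Gamma> i j) = \<alpha> j"
    and Gamma_row: "\<And>i. i < n \<Longrightarrow> (\<Sum>j<p. \<Gamma> i j) = 1 / real n"
    and Gamma_opt: "\<And>G. (\<forall>i<n. \<forall>j<p. G i j \<ge> 0) \<Longrightarrow>
          (\<forall>j<p. (\<Sum>i<n. G i j) = \<alpha> j) \<Longrightarrow>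
          (\<forall>i<n. (\<Sum>j<p. G i j) = 1 / real n) \<Longrightarrow>
          (\<Sum>i<n. \<Sum>j<p. \<Gamma> i j * (1/2 * (norm (X i - \<theta> j))\<^sup>2))
            \<le> (\<Sum>i<n. \<Sum>j<p. G i j * (1/2 * (norm (X i - \<theta> j))\<^sup>2))"
  shows "ennreal ((1 / real n) * (\<Sum>i<n.
            (norm (real n *\<^sub>R (\<Sum>j<p. \<Gamma> i j *\<^sub>R \<theta> j) - f (X i)))\<^sup>2))
         \<le> ennreal (L / lam) *
            W2sq (atomic_measure n (\<lambda>_. 1 / real n) (\<lambda>i. f (X i)))
                 (atomic_measure p \<alpha> \<theta>)"
  proof -
  define A where "A = (1 / real n) * (\<Sum>i<n.
            (norm (real n *\<^sub>R (\<Sum>j<p. \<Gamma> i j *\<^sub>R \<theta> j) - f (X i)))\<^sup>2)"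
  have nr: "real n > 0" using n_pos by simp
  have key: "ennreal (A * lam / L) \<le> W2sq (atomic_measure n (\<lambda>_. 1 / real n) (\<lambda>i. f (X i)))
                 (atomic_measure p \<alpha> \<theta>)"
    unfolding W2sq_def
  proof (rule Inf_greatest, clarify)
    fix \<gamma> :: "('a \<times> 'a) measure"
    assume sg: "sets \<gamma> = sets (borel \<Otimes>\<^sub>M borel)"
      and m1: "distr \<gamma> borel fst = atomic_measure n (\<lambda>_. 1 / real n) (\<lambda>i. f (X i))"
      and m2: "distr \<gamma> borel snd = atomic_measure p \<alpha> \<theta>"
    have s1: "(\<Sum>i<n. (\<lambda>_. 1 / real n) i) = 1" using nr by simp
    obtain G where Gnn: "\<forall>i<n. \<forall>j<p. G i j \<ge> 0" and Gcol: "\<forall>j<p. (\<Sum>i<n. G i j) = \<alpha> j"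
      and Grow: "\<forall>i<n. (\<Sum>j<p. G i j) = 1 / real n"
      and Gle: "ennreal (\<Sum>i<n. \<Sum>j<p. G i j * (norm (f (X i) - \<theta> j))\<^sup>2)
        \<le> (\<integral>\<^sup>+ z. ennreal ((norm (fst z - snd z))\<^sup>2) \<partial>\<gamma>)"
      using coupling_matrix[where ?w1.0="\<lambda>_. 1 / real n" and t="\<lambda>i. f (X i)" and n=n and p=p and ?w2.0=\<alpha>
          and \<theta>=\<theta> and \<gamma>=\<gamma>, OF _ alpha_pos s1 sg m1 m2] nr by auto
    have "A \<le> (L / lam) * (\<Sum>i<n. \<Sum>j<p. G i j * (norm (f (X i) - \<theta> j))\<^sup>2)"
      unfolding A_def
      by (rule main_alg[OF n_pos lam_pos A1 L_pos A2 Gamma_nonneg Gamma_col Gamma_row Gamma_opt])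
        (use Gnn Gcol Grow in auto)
    then have "A * lam / L \<le> (\<Sum>i<n. \<Sum>j<p. G i j * (norm (f (X i) - \<theta> j))\<^sup>2)"
      using lam_pos L_pos by (simp add: field_simps)
    then have "ennreal (A * lam / L) \<le> ennreal (\<Sum>i<n. \<Sum>j<p. G i j * (norm (f (X i) - \<theta> j))\<^sup>2)"
      by (rule ennreal_leI)
    then show "ennreal (A * lam / L) \<le> (\<integral>\<^sup>+ z. ennreal ((norm (fst z - snd z))\<^sup>2) \<partial>\<gamma>)"
      using Gle by (rule order_trans)
  qed
  have A_nn: "A \<ge> 0" unfolding A_def using nr by (intro mult_nonneg_nonneg sum_nonneg) auto
  have "ennreal A = ennreal (L / lam) * ennreal (A * lam / L)"
    using lam_pos L_pos A_nn by (simp add: ennreal_mult[symmetric])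
  also have "\<dots> \<le> ennreal (L / lam) * W2sq (atomic_measure n (\<lambda>_. 1 / real n) (\<lambda>i. f (X i)))
                 (atomic_measure p \<alpha> \<theta>)"
    by (rule mult_left_mono[OF key]) simp
  finally show ?thesis unfolding A_def .
qed

end
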